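(* Let $B>0$ and let $D_0$ be the outer disk bounded by the circle centered at $(0,0)$ of radius $1/B$ (so $D_0$ has curvature $-B$). Let $A$ be an inner disk of curvature $A>0$ tangent to $D_0$ (lying inside the circle), and let $$\mathbf a=\begin{bmatrix}m\\ n\end{bmatrix}=\mathrm{spin}(A,D_0).$$ Then $A=B+m^2+n^2$, the radius of $A$ is $1/A$, and its center is $$\left(\frac{m^2-n^2}{B(B+m^2+n^2)},\ \frac{2mn}{B(B+m^2+n^2)}\right).$$ Equivalently, in terms of the disk symbol (reduced center coordinates over curvature), $A$ is $\dfrac{(m^2-n^2)/B,\ 2mn/B}{m^2+n^2+B}$.
   Context: An inner disk of radius $r$ has curvature $1/r$ and signed radius $r$; the outer disk (exterior) of a circle of radius $r$ has curvature $-1/r$ and signed radius $-r$. Identify the plane with $\mathbb C$. For tangent disks $X,Y$ with centers $c_X,c_Y$ and signed radii $r_X,r_Y$, the tangency spinor is $\mathrm{spin}(X,Y)=\pm\sqrt{(c_Y-c_X)/(r_Xr_Y)}\in\mathbb C$, regarded as a vector in $\mathbb R^2$ (defined up to sign). The symbol of a disk of curvature $\beta$ centered at $(x,y)$ is $\frac{\dot x,\dot y}{\beta}$ with $\dot x=\beta x$, $\dot y=\beta y$. *)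

theory Defs
  imports Complex_Main
begin

text \<open>A disk is represented by its center (a complex number) and its signed radius:
  positive for an inner disk (closed ball), negative for an outer disk
  (exterior of the circle).\<close>

definition curvature :: "real \<Rightarrow> real" where
  "curvature r = 1 / r"

text \<open>Tangency spinor of tangent disks X, Y: the square roots (the spinor is
  defined only up to sign) of (c_Y - c_X)/(r_X r_Y).\<close>
definition spin :: "complex \<Rightarrow> real \<Rightarrow> complex \<Rightarrow> real \<Rightarrow> complex set" where
  "spin cX rX cY rY = {z. z ^ 2 = (cY - cX) / complex_of_real (rX * rY)}"

text \<open>An inner disk (center cX, radius rX > 0) lies inside the circle of
  radius R centered at cY and is tangent to it (internal tangency), i.e.
  it is tangent to the outer disk of signed radius -R.\<close>
definition inner_tangent_to_outer :: "complex \<Rightarrow> real \<Rightarrow> complex \<Rightarrow> real \<Rightarrow> bool" where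
  "inner_tangent_to_outer cX rX cY R \<longleftrightarrow> 0 < rX \<and> rX \<le> R \<and> cmod (cY - cX) = R - rX"

end

theory Submission
  imports Defs
begin

theorem propositionA1:
  fixes B \<alpha> :: real and c z :: complex
  assumes "B > 0" and "\<alpha> > 0"
    and "inner_tangent_to_outer c (1 / \<alpha>) 0 (1 / B)"
    and "z \<in> spin c (1 / \<alpha>) 0 (- (1 / B))"
  shows "\<alpha> = B + (Re z)\<^sup>2 + (Im z)\<^sup>2
    \<and> curvature (1 / \<alpha>) = \<alpha>
    \<and> c = Complex (((Re z)\<^sup>2 - (Im z)\<^sup>2) / (B * (B + (Re z)\<^sup>2 + (Im z)\<^sup>2)))
                  (2 * Re z * Im z / (B * (B + (Re z)\<^sup>2 + (Im z)\<^sup>2)))"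
proof -
  have z2: "z ^ 2 = (0 - c) / complex_of_real (1 / \<alpha> * - (1 / B))"
    using assms(4) by (simp add: spin_def)
  have z2': "z ^ 2 = c * complex_of_real (\<alpha> * B)"
    using z2 assms(1,2) by (simp add: field_simps)
  have nc: "cmod c = 1 / B - 1 / \<alpha>"
    using assms(3) by (simp add: inner_tangent_to_outer_def)
  have "cmod (z ^ 2) = cmod c * (\<alpha> * B)"
    using z2' assms(1,2) by (simp add: norm_mult)
  also have "\<dots> = \<alpha> - B" using nc assms(1,2) by (simp add: field_simps)
  finally have "cmod z ^ 2 = \<alpha> - B" by (simp add: norm_power)
  hence sq: "(Re z)\<^sup>2 + (Im z)\<^sup>2 = \<alpha> - B"
    by (simp add: cmod_power2)
  hence a: "\<alpha> = B + (Re z)\<^sup>2 + (Im z)\<^sup>2" by simp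
  have cz: "c = z ^ 2 / complex_of_real (\<alpha> * B)"
    using z2' assms(1,2) by simp
  have "c = Complex (Re (z^2) / (\<alpha> * B)) (Im (z^2) / (\<alpha> * B))"
    by (subst cz, simp add: complex_eq_iff Re_divide_of_real Im_divide_of_real)
  also have "\<dots> = Complex (((Re z)\<^sup>2 - (Im z)\<^sup>2) / (B * (B + (Re z)\<^sup>2 + (Im z)\<^sup>2)))
                  (2 * Re z * Im z / (B * (B + (Re z)\<^sup>2 + (Im z)\<^sup>2)))"
    using a by (simp add: power2_eq_square mult.commute)
  finally show ?thesis using a assms(2) sq by (simp add: curvature_def)
qed

end
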